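(* In the setting of short geodesics, there is $\varepsilon>0$ such that for every $0<s<\varepsilon$ the following holds for $\gamma_s(t)=(x(t),y(t),\xi(t),\eta(t))$: - $\dot\xi(t)<0$ for $t\in(0,\tau(0,y,\sigma_s))$; - $x(t)\le Cs$ for all $t\in[0,\tau(0,y,\sigma_s)]$, where the constant $C$ is uniform in $t$ and depends only on the metric $h$.
   Context: Gas giant setting. $M$ is a compact manifold with boundary, $\dim M=n\ge 2$, and $g=\rho^{-1}\bar g$ with $\bar g$ smooth up to the boundary and $\rho$ a boundary defining function. Near $\partial M$ there are coordinates $(x,y)$ in which $g=\mathrm{d}x^2+x^{-2}h(x,y,\mathrm{d}y)$, with $h_x$ a family of metrics on $\partial M$ smooth in $x$ up to $x=0$. Dual coordinates are $(\xi,\eta)$. Geodesic flow. $\phi_t$ is the Hamiltonian flow of $H=\tfrac12\xi^2+\tfrac12x^2h^{ij}\eta_i\eta_j$: - $\dot x=\xi$, - $\dot y^i=x^2h^{ij}\eta_j$, - $\dot\xi=-xh^{ij}\eta_i\eta_j-\tfrac12x^2\partial_xh^{ij}\eta_i\eta_j$, - $\dot\eta_i=-\tfrac12x^2\partial_{y^i}h^{kj}\eta_k\eta_j$. Short geodesics. Fix $y\in\partial M$ and $\eta\in T^*_y\partial M$ with $h^{ij}(0,y)\eta_i\eta_j=1$. For $s>0$ let $\sigma_s=(s,\eta)$, i.e. $\xi=s$, and $\gamma_s(t)=\phi_t(0,y,\sigma_s)$. Here $\tau(0,y,\sigma_s)$ is the first positive time at which $x$ returns to $0$. *)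

theory Defs
  imports "HOL-Analysis.Analysis"
begin

fun iter_dd :: "('a::real_normed_vector \<Rightarrow> 'b::real_normed_vector) \<Rightarrow> 'a list \<Rightarrow> 'a \<Rightarrow> 'b" where
  "iter_dd f [] = f"
| "iter_dd f (v # vs) = (\<lambda>p. frechet_derivative (iter_dd f vs) (at p) v)"

definition smooth_on :: "('a::real_normed_vector \<Rightarrow> 'b::real_normed_vector) \<Rightarrow> 'a set \<Rightarrow> bool" where
  "smooth_on f W \<longleftrightarrow> open W \<and> (\<forall>vs. iter_dd f vs differentiable_on W)"

text \<open>Boundary coordinates y live in real^'m (so dim M = CARD('m) + 1 \<ge> 2).
 h (x,y) is the metric h_x at y; hinv is the dual metric h^{ij}.\<close>

definition hinv :: "(real \<times> (real^'m) \<Rightarrow> real^'m^'m) \<Rightarrow> real \<times> (real^'m) \<Rightarrow> real^'m^'m" where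
  "hinv h p = matrix_inv (h p)"

definition metric_family_on :: "(real \<times> (real^'m) \<Rightarrow> real^'m^'m) \<Rightarrow> (real \<times> (real^'m)) set \<Rightarrow> bool" where
  "metric_family_on h W \<longleftrightarrow> smooth_on h W \<and>
     (\<forall>p\<in>W. transpose (h p) = h p \<and> (\<forall>v. v \<noteq> 0 \<longrightarrow> v \<bullet> (h p *v v) > 0))"

definition dx_hinv :: "(real \<times> (real^'m) \<Rightarrow> real^'m^'m) \<Rightarrow> real \<times> (real^'m) \<Rightarrow> real^'m^'m" where
  "dx_hinv h p = frechet_derivative (hinv h) (at p) (1, 0)"

definition dy_hinv :: "(real \<times> (real^'m) \<Rightarrow> real^'m^'m) \<Rightarrow> 'm \<Rightarrow> real \<times> (real^'m) \<Rightarrow> real^'m^'m" where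
  "dy_hinv h i p = frechet_derivative (hinv h) (at p) (0, axis i 1)"

text \<open>(x,y,xi,eta) solves Hamilton's equations for H = xi^2/2 + x^2 h^{ij} eta_i eta_j / 2
 on [0,T], staying in W, starting at (0,y0,s,eta0); T = tau is the first positive
 time at which x returns to 0.\<close>
definition short_geodesic ::
  "(real \<times> (real^'m) \<Rightarrow> real^'m^'m) \<Rightarrow> (real \<times> (real^'m)) set \<Rightarrow> real^'m \<Rightarrow> real^'m \<Rightarrow> real \<Rightarrow>
   (real \<Rightarrow> real) \<Rightarrow> (real \<Rightarrow> real^'m) \<Rightarrow> (real \<Rightarrow> real) \<Rightarrow> (real \<Rightarrow> real^'m) \<Rightarrow> real \<Rightarrow> bool" where
  "short_geodesic h W y0 eta0 s x y xi eta T \<longleftrightarrow>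
     0 < T \<and> x 0 = 0 \<and> y 0 = y0 \<and> xi 0 = s \<and> eta 0 = eta0 \<and>
     x T = 0 \<and> (\<forall>t\<in>{0<..<T}. x t \<noteq> 0) \<and>
     (\<forall>t\<in>{0..T}. (x t, y t) \<in> W \<and>
        (x has_real_derivative xi t) (at t within {0..T}) \<and>
        (y has_vector_derivative ((x t)\<^sup>2 *\<^sub>R (hinv h (x t, y t) *v eta t))) (at t within {0..T}) \<and>
        (xi has_real_derivative
            (- x t * (eta t \<bullet> (hinv h (x t, y t) *v eta t))
             - (1/2) * (x t)\<^sup>2 * (eta t \<bullet> (dx_hinv h (x t, y t) *v eta t)))) (at t within {0..T}) \<and>
        (eta has_vector_derivative
            (\<chi> i. - (1/2) * (x t)\<^sup>2 * (eta t \<bullet> (dy_hinv h i (x t, y t) *v eta t)))) (at t within {0..T}))"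

end

theory Submission
  imports Defs
begin

lemma norm_vec_le_sum: "norm (x :: 'a::real_normed_vector^'n) \<le> (\<Sum>i\<in>UNIV. norm (x $ i))"
  unfolding norm_vec_def by (rule L2_set_le_sum) auto

lemma entry_le_norm:
  fixes A :: "real^'n^'m"
  shows "\<bar>A $ i $ j\<bar> \<le> norm A"
  using component_le_norm_cart[of "A $ i" j] Finite_Cartesian_Product.norm_nth_le[of A i] by linarith

lemma norm_mm:
  fixes A :: "real^'n^'m" and B :: "real^'p^'n"
  shows "norm (A ** B) \<le> norm A * norm B * real (CARD('m) * CARD('n) * CARD('p))"
proof -
  have e: "\<bar>(A ** B) $ i $ j\<bar> \<le> real CARD('n) * (norm A * norm B)" for i j
  proof -
    have "\<bar>(A ** B) $ i $ j\<bar> = \<bar>\<Sum>k\<in>UNIV. A $ i $ k * B $ k $ j\<bar>"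
      by (simp add: matrix_matrix_mult_def)
    also have "\<dots> \<le> (\<Sum>k\<in>(UNIV::'n set). \<bar>A $ i $ k * B $ k $ j\<bar>)" by (rule sum_abs)
    also have "\<dots> \<le> (\<Sum>k\<in>(UNIV::'n set). norm A * norm B)"
      by (intro sum_mono) (auto simp: abs_mult intro!: mult_mono entry_le_norm)
    finally show ?thesis by simp
  qed
  have "norm (A ** B) \<le> (\<Sum>i\<in>UNIV. norm ((A ** B) $ i))" by (rule norm_vec_le_sum)
  also have "\<dots> \<le> (\<Sum>i\<in>(UNIV::'m set). \<Sum>j\<in>(UNIV::'p set). \<bar>(A ** B) $ i $ j\<bar>)"
    by (intro sum_mono norm_le_l1_cart)
  also have "\<dots> \<le> (\<Sum>i\<in>(UNIV::'m set). \<Sum>j\<in>(UNIV::'p set). real CARD('n) * (norm A * norm B))"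
    by (intro sum_mono e)
  also have "\<dots> = norm A * norm B * real (CARD('m) * CARD('n) * CARD('p))" by simp
  finally show ?thesis .
qed

lemma norm_mv:
  fixes A :: "real^'n^'m" and v :: "real^'n"
  shows "norm (A *v v) \<le> norm A * norm v * real (CARD('m) * CARD('n))"
proof -
  have e: "\<bar>(A *v v) $ i\<bar> \<le> real CARD('n) * (norm A * norm v)" for i
  proof -
    have "\<bar>(A *v v) $ i\<bar> = \<bar>\<Sum>k\<in>UNIV. A $ i $ k * v $ k\<bar>"
      by (simp add: matrix_vector_mult_def)
    also have "\<dots> \<le> (\<Sum>k\<in>(UNIV::'n set). \<bar>A $ i $ k * v $ k\<bar>)" by (rule sum_abs)
    also have "\<dots> \<le> (\<Sum>k\<in>(UNIV::'n set). norm A * norm v)"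
      by (intro sum_mono) (auto simp: abs_mult intro!: mult_mono entry_le_norm component_le_norm_cart)
    finally show ?thesis by simp
  qed
  have "norm (A *v v) \<le> (\<Sum>i\<in>UNIV. \<bar>(A *v v) $ i\<bar>)" by (rule norm_le_l1_cart)
  also have "\<dots> \<le> (\<Sum>i\<in>(UNIV::'m set). real CARD('n) * (norm A * norm v))"
    by (intro sum_mono e)
  also have "\<dots> = norm A * norm v * real (CARD('m) * CARD('n))" by simp
  finally show ?thesis .
qed

lemma bb_mm: "bounded_bilinear (\<lambda>(A::real^'n^'m) (B::real^'p^'n). A ** B)"
proof
  fix a a' :: "real^'n^'m" and b b' :: "real^'p^'n" and r :: real
  show "(a + a') ** b = a ** b + a' ** b"
    by (simp add: matrix_matrix_mult_def vec_eq_iff sum.distrib distrib_right)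
  show "a ** (b + b') = a ** b + a ** b'" by (rule matrix_add_ldistrib)
  show "(r *\<^sub>R a) ** b = r *\<^sub>R (a ** b)"
    by (simp add: matrix_matrix_mult_def vec_eq_iff sum_distrib_left mult.assoc)
  show "a ** (r *\<^sub>R b) = r *\<^sub>R (a ** b)"
    by (simp add: matrix_matrix_mult_def vec_eq_iff sum_distrib_left mult.left_commute)
next
  show "\<exists>K. \<forall>a b. norm ((a::real^'n^'m) ** (b::real^'p^'n)) \<le> norm a * norm b * K"
    using norm_mm by blast
qed

lemma bb_mv: "bounded_bilinear (\<lambda>(A::real^'n^'m) (v::real^'n). A *v v)"
proof
  fix a a' :: "real^'n^'m" and b b' :: "real^'n" and r :: real
  show "(a + a') *v b = a *v b + a' *v b"
    by (simp add: matrix_vector_mult_def vec_eq_iff sum.distrib distrib_right)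
  show "a *v (b + b') = a *v b + a *v b'"
    by (simp add: matrix_vector_mult_def vec_eq_iff sum.distrib distrib_left)
  show "(r *\<^sub>R a) *v b = r *\<^sub>R (a *v b)"
    by (simp add: matrix_vector_mult_def vec_eq_iff sum_distrib_left mult.assoc)
  show "a *v (r *\<^sub>R b) = r *\<^sub>R (a *v b)"
    by (simp add: matrix_vector_mult_def vec_eq_iff sum_distrib_left mult.left_commute)
next
  show "\<exists>K. \<forall>a b. norm ((a::real^'n^'m) *v (b::real^'n)) \<le> norm a * norm b * K"
    using norm_mv by blast
qed

lemma smooth_h_deriv:
  assumes "open W" "smooth_on h W" "p \<in> W"
  shows "(h has_derivative frechet_derivative h (at p)) (at p)"
proof -
  have "\<forall>vs. iter_dd h vs differentiable_on W" using assms(2) unfolding smooth_on_def by (rule conjunct2)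
  then have "iter_dd h [] differentiable_on W" by (rule spec)
  then have "h differentiable_on W" by simp
  then have "h differentiable (at p within W)" using assms(3) by (simp add: differentiable_on_def)
  then have "h differentiable (at p)" using at_within_open[OF assms(3,1)] by simp
  then show ?thesis by (rule frechet_derivative_works[THEN iffD1])
qed

lemma smooth_h_dcont:
  assumes "open W" "smooth_on h W" "p \<in> W"
  shows "isCont (\<lambda>q. frechet_derivative h (at q) v) p"
proof -
  have "\<forall>vs. iter_dd h vs differentiable_on W" using assms(2) unfolding smooth_on_def by (rule conjunct2)
  then have "iter_dd h [v] differentiable_on W" by (rule spec)
  then have "continuous_on W (\<lambda>q. frechet_derivative h (at q) v)"
    by (simp add: differentiable_imp_continuous_on)
  then show ?thesis using assms(1,3) continuous_on_eq_continuous_at by blast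
qed

lemma inv_h:
  fixes h :: "real \<times> (real^'m) \<Rightarrow> real^'m^'m"
  assumes "metric_family_on h W" "p \<in> W"
  shows "hinv h p ** h p = mat 1 \<and> h p ** hinv h p = mat 1"
proof -
  have "\<forall>v. h p *v v = 0 \<longrightarrow> v = 0"
  proof (intro allI impI)
    fix v assume v0: "h p *v v = 0"
    have pd: "\<forall>v. v \<noteq> 0 \<longrightarrow> v \<bullet> (h p *v v) > 0"
      using assms unfolding metric_family_on_def by blast
    show "v = 0"
    proof (rule ccontr)
      assume "v \<noteq> 0"
      then have "v \<bullet> (h p *v v) > 0" using pd by blast
      then show False using v0 by simp
    qed
  qed
  then have "\<exists>B. B ** h p = mat 1" by (subst matrix_left_invertible_ker)
  then have "invertible (h p)" by (subst invertible_left_inverse)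
  then have "\<exists>A'. h p ** A' = mat 1 \<and> A' ** h p = mat 1" unfolding invertible_def .
  then have "h p ** matrix_inv (h p) = mat 1 \<and> matrix_inv (h p) ** h p = mat 1"
    unfolding matrix_inv_def by (rule someI_ex)
  then show ?thesis unfolding hinv_def by simp
qed


lemma hinv_ident:
  fixes h :: "real \<times> (real^'m) \<Rightarrow> real^'m^'m"
  assumes "metric_family_on h W" "p \<in> W" "q \<in> W"
  shows "hinv h q - hinv h p = - (hinv h q ** (h q - h p) ** hinv h p)"
proof -
  note bb = bounded_bilinear.diff_left[OF bb_mm] bounded_bilinear.diff_right[OF bb_mm]
  have "hinv h q ** (h q - h p) ** hinv h p = hinv h q ** h q ** hinv h p - hinv h q ** h p ** hinv h p"
    by (simp add: bb)
  also have "\<dots> = hinv h p - hinv h q"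
    using inv_h[OF assms(1,2)] inv_h[OF assms(1,3)] by (simp flip: matrix_mul_assoc)
  finally show ?thesis by simp
qed

lemma real_aux:
  fixes a b d K N :: real
  assumes "0 \<le> a" "0 \<le> b" "0 \<le> d" "0 \<le> K"
    and D: "N \<le> a * (K * K * d * b)" and tri: "a \<le> b + N" and small: "K * K * d * b \<le> 1/2"
  shows "a \<le> 2 * b \<and> N \<le> 2 * K * K * b^2 * d"
proof -
  have X: "0 \<le> K * K * d * b" using assms by simp
  have "a * (K * K * d * b) \<le> a * (1/2)" using small assms by (intro mult_left_mono) auto
  then have A: "a \<le> 2 * b" using D tri by linarith
  have "N \<le> (2 * b) * (K * K * d * b)" using D mult_right_mono[OF A X] by linarith
  also have "\<dots> = 2 * K * K * b^2 * d" by (simp add: power2_eq_square algebra_simps)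
  finally show ?thesis using A by blast
qed

lemma hinv_bound:
  fixes h :: "real \<times> (real^'m) \<Rightarrow> real^'m^'m"
  assumes "metric_family_on h W" "p \<in> W" "q \<in> W"
    and small: "real (CARD('m) * CARD('m) * CARD('m)) * real (CARD('m) * CARD('m) * CARD('m)) * norm (h q - h p) * norm (hinv h p) \<le> 1/2"
  shows "norm (hinv h q) \<le> 2 * norm (hinv h p) \<and>
         norm (hinv h q - hinv h p) \<le> 2 * real (CARD('m) * CARD('m) * CARD('m)) * real (CARD('m) * CARD('m) * CARD('m)) * (norm (hinv h p))^2 * norm (h q - h p)"
proof -
  define K where "K = real (CARD('m) * CARD('m) * CARD('m))"
  define a where "a = norm (hinv h q)"
  define b where "b = norm (hinv h p)"
  define d where "d = norm (h q - h p)"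
  have K: "K \<ge> 0" unfolding K_def by simp
  have "norm (hinv h q - hinv h p) = norm (hinv h q ** (h q - h p) ** hinv h p)"
    by (simp only: hinv_ident[OF assms(1-3)] norm_minus_cancel)
  also have "\<dots> \<le> norm (hinv h q ** (h q - h p)) * b * K"
    unfolding b_def K_def by (rule norm_mm)
  also have "\<dots> \<le> (a * d * K) * b * K"
  proof -
    have "norm (hinv h q ** (h q - h p)) \<le> a * d * K"
      unfolding a_def d_def K_def by (rule norm_mm)
    moreover have "0 \<le> b" "0 \<le> K" unfolding b_def K_def by simp_all
    ultimately show ?thesis by (simp add: mult_right_mono)
  qed
  also have "\<dots> = a * (K * K * d * b)" by (simp add: algebra_simps)
  finally have D: "norm (hinv h q - hinv h p) \<le> a * (K * K * d * b)" .
  have tri: "a \<le> b + norm (hinv h q - hinv h p)" unfolding a_def b_def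
    by (metis add.commute diff_add_cancel norm_triangle_ineq)
  have "a \<le> 2 * b \<and> norm (hinv h q - hinv h p) \<le> 2 * K * K * b^2 * d"
  proof (rule real_aux[OF _ _ _ K D tri])
    show "0 \<le> a" "0 \<le> b" "0 \<le> d" unfolding a_def b_def d_def by simp_all
    show "K * K * d * b \<le> 1/2" using small unfolding K_def d_def b_def .
  qed
  then show ?thesis unfolding a_def b_def d_def K_def .
qed

lemma hinv_near:
  fixes h :: "real \<times> (real^'m) \<Rightarrow> real^'m^'m"
  assumes W: "open W" and mf: "metric_family_on h W" and p: "p \<in> W"
  shows "\<forall>\<^sub>F q in at p. q \<in> W \<and> norm (hinv h q) \<le> 2 * norm (hinv h p) \<and>
         norm (hinv h q - hinv h p) \<le> 2 * real (CARD('m) * CARD('m) * CARD('m)) * real (CARD('m) * CARD('m) * CARD('m)) * (norm (hinv h p))^2 * norm (h q - h p)"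
    and "((\<lambda>q. norm (h q - h p)) \<longlongrightarrow> 0) (at p)"
proof -
  define K where "K = real (CARD('m) * CARD('m) * CARD('m))"
  define b where "b = norm (hinv h p)"
  have sm: "smooth_on h W" using mf unfolding metric_family_on_def by blast
  have "continuous (at p) h"
    using has_derivative_continuous[OF smooth_h_deriv[OF W sm p]] by simp
  then have "(h \<longlongrightarrow> h p) (at p)" by (simp add: isCont_def)
  then have "((\<lambda>q. h q - h p) \<longlongrightarrow> 0) (at p)" by (simp add: LIM_zero)
  then show t0: "((\<lambda>q. norm (h q - h p)) \<longlongrightarrow> 0) (at p)" by (rule tendsto_norm_zero)
  have "((\<lambda>q. K * K * norm (h q - h p) * b) \<longlongrightarrow> K * K * 0 * b) (at p)"
    by (intro tendsto_intros t0)
  then have "\<forall>\<^sub>F q in at p. K * K * norm (h q - h p) * b < 1/2"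
    by (intro order_tendstoD(2)) auto
  moreover have "\<forall>\<^sub>F q in at p. q \<in> W" by (rule eventually_at_in_open'[OF W p])
  ultimately show "\<forall>\<^sub>F q in at p. q \<in> W \<and> norm (hinv h q) \<le> 2 * norm (hinv h p) \<and>
         norm (hinv h q - hinv h p) \<le> 2 * real (CARD('m) * CARD('m) * CARD('m)) * real (CARD('m) * CARD('m) * CARD('m)) * (norm (hinv h p))^2 * norm (h q - h p)"
  proof eventually_elim
    case (elim q)
    then show ?case using hinv_bound[OF mf p, of q] unfolding K_def b_def by auto
  qed
qed

lemma hinv_cont:
  fixes h :: "real \<times> (real^'m) \<Rightarrow> real^'m^'m"
  assumes W: "open W" and mf: "metric_family_on h W" and p: "p \<in> W"
  shows "((\<lambda>q. norm (hinv h q - hinv h p)) \<longlongrightarrow> 0) (at p)" "isCont (hinv h) p"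
proof -
  define K where "K = real (CARD('m) * CARD('m) * CARD('m))"
  note nr = hinv_near[OF W mf p, folded K_def]
  have "((\<lambda>q. 2 * K * K * (norm (hinv h p))^2 * norm (h q - h p)) \<longlongrightarrow> 2 * K * K * (norm (hinv h p))^2 * 0) (at p)"
    by (intro tendsto_intros nr(2))
  then have g: "((\<lambda>q. 2 * K * K * (norm (hinv h p))^2 * norm (h q - h p)) \<longlongrightarrow> 0) (at p)" by simp
  have "((\<lambda>q. hinv h q - hinv h p) \<longlongrightarrow> 0) (at p)"
    by (rule Lim_null_comparison[OF _ g]) (use nr(1) in \<open>auto elim: eventually_mono\<close>)
  then show "((\<lambda>q. norm (hinv h q - hinv h p)) \<longlongrightarrow> 0) (at p)" by (rule tendsto_norm_zero)
  from \<open>((\<lambda>q. hinv h q - hinv h p) \<longlongrightarrow> 0) (at p)\<close> show "isCont (hinv h) p"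
    unfolding isCont_def by (rule LIM_zero_cancel)
qed

lemma hinv_ident2:
  fixes Q P H L :: "real^'m^'m"
  assumes "Q - P = - (Q ** H ** P)"
  shows "Q - P - (- (P ** L ** P)) = - (Q ** (H - L) ** P) - (Q - P) ** L ** P"
proof -
  note bb = bounded_bilinear.diff_left[OF bb_mm] bounded_bilinear.diff_right[OF bb_mm]
  have e1: "Q ** (H - L) ** P = Q ** H ** P - Q ** L ** P" by (simp add: bb)
  have e2: "(Q - P) ** L ** P = Q ** L ** P - P ** L ** P" by (simp add: bb)
  show ?thesis unfolding e1 e2 unfolding assms by (simp add: algebra_simps)
qed

lemma hinv_deriv:
  fixes h :: "real \<times> (real^'m) \<Rightarrow> real^'m^'m"
  assumes W: "open W" and mf: "metric_family_on h W" and p: "p \<in> W"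
  shows "(hinv h has_derivative (\<lambda>v. - (hinv h p ** frechet_derivative h (at p) v ** hinv h p))) (at p)"
proof -
  define K where "K = real (CARD('m) * CARD('m) * CARD('m))"
  define b where "b = norm (hinv h p)"
  define h' where "h' = frechet_derivative h (at p)"
  define P where "P = hinv h p"
  have sm: "smooth_on h W" using mf unfolding metric_family_on_def by blast
  have hd: "(h has_derivative h') (at p)" unfolding h'_def by (rule smooth_h_deriv[OF W sm p])
  have bl: "bounded_linear h'" using hd by (rule has_derivative_bounded_linear)
  obtain M where M: "M > 0" "\<And>x. norm (h' x) \<le> norm x * M"
    using bounded_linear.pos_bounded[OF bl] by blast
  have hR: "((\<lambda>q. norm (h q - h p - h' (q - p)) / norm (q - p)) \<longlongrightarrow> 0) (at p)"
    using hd has_derivative_iff_norm[of h h' p UNIV] by simp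
  note nr = hinv_near[OF W mf p, folded K_def b_def]
  note hc = hinv_cont(1)[OF W mf p]
  have K: "K \<ge> 0" "b \<ge> 0" unfolding K_def b_def by simp_all
  have blD: "bounded_linear (\<lambda>v. - (P ** h' v ** P))"
  proof -
    have "bounded_linear (\<lambda>v. P ** h' v)"
      by (rule bounded_linear_compose[OF bounded_bilinear.bounded_linear_right[OF bb_mm] bl])
    then have "bounded_linear (\<lambda>v. P ** h' v ** P)"
      by (rule bounded_linear_compose[OF bounded_bilinear.bounded_linear_left[OF bb_mm]])
    then show ?thesis by (rule bounded_linear_minus)
  qed
  define E where "E q = hinv h q - hinv h p - (- (P ** h' (q - p) ** P))" for q
  have "((\<lambda>q. norm (E q) / norm (q - p)) \<longlongrightarrow> 0) (at p)"
  proof (rule Lim_null_comparison)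
    have "((\<lambda>q. 2 * K * K * b * b * (norm (h q - h p - h' (q - p)) / norm (q - p)) + K * K * b * M * norm (hinv h q - hinv h p))
       \<longlongrightarrow> 2 * K * K * b * b * 0 + K * K * b * M * 0) (at p)"
      by (intro tendsto_intros hR hc)
    then show "((\<lambda>q. 2 * K * K * b * b * (norm (h q - h p - h' (q - p)) / norm (q - p)) + K * K * b * M * norm (hinv h q - hinv h p))
       \<longlongrightarrow> 0) (at p)" by simp
    show "\<forall>\<^sub>F q in at p. norm (norm (E q) / norm (q - p)) \<le> 2 * K * K * b * b * (norm (h q - h p - h' (q - p)) / norm (q - p)) + K * K * b * M * norm (hinv h q - hinv h p)"
      using nr(1) eventually_neq_at_within[of p p UNIV]
    proof eventually_elim
      case (elim q)
      define Q where "Q = hinv h q"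
      define R where "R = h q - h p - h' (q - p)"
      define n where "n = norm (q - p)"
      have n: "n > 0" using elim unfolding n_def by simp
      have Eq: "E q = - (Q ** R ** P) - (Q - P) ** h' (q - p) ** P"
        unfolding E_def Q_def R_def P_def
        by (rule hinv_ident2[OF hinv_ident[OF mf p]]) (use elim in auto)
      have Qb: "norm Q \<le> 2 * b" using elim unfolding Q_def b_def by auto
      have n1: "norm (Q ** R ** P) \<le> 2 * K * K * b * b * norm R"
      proof -
        have "norm (Q ** R ** P) \<le> norm (Q ** R) * b * K" unfolding b_def K_def P_def by (rule norm_mm)
        also have "\<dots> \<le> (norm Q * norm R * K) * b * K"
          using K norm_mm[of Q R] unfolding K_def by (intro mult_right_mono) auto
        also have "\<dots> \<le> (2 * b * norm R * K) * b * K"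
          using K Qb by (intro mult_right_mono) auto
        also have "\<dots> = 2 * K * K * b * b * norm R" by (simp add: algebra_simps)
        finally show ?thesis .
      qed
      have n2: "norm ((Q - P) ** h' (q - p) ** P) \<le> K * K * b * M * norm (Q - P) * n"
      proof -
        have "norm ((Q - P) ** h' (q - p) ** P) \<le> norm ((Q - P) ** h' (q - p)) * b * K"
          unfolding b_def K_def P_def by (rule norm_mm)
        also have "\<dots> \<le> (norm (Q - P) * norm (h' (q - p)) * K) * b * K"
          using K norm_mm[of "Q - P" "h' (q - p)"] unfolding K_def by (intro mult_right_mono) auto
        also have "\<dots> \<le> (norm (Q - P) * (n * M) * K) * b * K"
          using K M(2)[of "q - p"] unfolding n_def by (intro mult_right_mono mult_left_mono) auto
        also have "\<dots> = K * K * b * M * norm (Q - P) * n" by (simp add: algebra_simps)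
        finally show ?thesis .
      qed
      have "norm (E q) \<le> 2 * K * K * b * b * norm R + K * K * b * M * norm (Q - P) * n"
        unfolding Eq using n1 n2 norm_triangle_ineq4[of "- (Q ** R ** P)" "(Q - P) ** h' (q - p) ** P"]
        by simp
      then have "norm (E q) / n \<le> (2 * K * K * b * b * norm R + K * K * b * M * norm (Q - P) * n) / n"
        using n by (intro divide_right_mono) auto
      also have "\<dots> = 2 * K * K * b * b * (norm R / n) + K * K * b * M * norm (Q - P)"
        using n by (simp add: field_simps)
      finally show ?case unfolding Q_def R_def n_def P_def by simp
    qed
  qed
  then have "(hinv h has_derivative (\<lambda>v. - (P ** h' v ** P))) (at p within UNIV)"
    unfolding has_derivative_iff_norm using blD unfolding E_def by (simp add: algebra_simps)
  then show ?thesis unfolding P_def h'_def by simp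
qed

lemma quad_bound:
  fixes M :: "real^'m^'m" and v :: "real^'m"
  shows "\<bar>v \<bullet> (M *v v)\<bar> \<le> norm v * norm v * norm M * real (CARD('m) * CARD('m))"
proof -
  have "\<bar>v \<bullet> (M *v v)\<bar> \<le> norm v * norm (M *v v)" by (rule Cauchy_Schwarz_ineq2)
  also have "\<dots> \<le> norm v * (norm M * norm v * real (CARD('m) * CARD('m)))"
    by (intro mult_left_mono norm_mv) auto
  finally show ?thesis by (simp add: algebra_simps)
qed

lemma mmm_bound:
  fixes A B :: "real^'m^'m"
  shows "norm (A ** B ** A) \<le> norm A * norm B * norm A * real (CARD('m) * CARD('m) * CARD('m)) * real (CARD('m) * CARD('m) * CARD('m))"
proof -
  define K where "K = real (CARD('m) * CARD('m) * CARD('m))"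
  have K: "K \<ge> 0" unfolding K_def by simp
  have "norm (A ** B ** A) \<le> norm (A ** B) * norm A * K" unfolding K_def by (rule norm_mm)
  also have "\<dots> \<le> (norm A * norm B * K) * norm A * K"
    using K norm_mm[of A B] unfolding K_def by (intro mult_right_mono) auto
  finally show ?thesis unfolding K_def by (simp add: algebra_simps)
qed

lemma mono3:
  fixes x1 x2 x3 y1 y2 y3 k :: real
  assumes "0 \<le> x1" "x1 \<le> y1" "0 \<le> x2" "x2 \<le> y2" "0 \<le> x3" "x3 \<le> y3" "0 \<le> k"
  shows "x1 * x2 * x3 * k \<le> y1 * y2 * y3 * k"
proof -
  have a: "x1 * x2 \<le> y1 * y2" by (rule mult_mono) (use assms in auto)
  have "x1 * x2 * x3 \<le> y1 * y2 * y3" by (rule mult_mono[OF a]) (use assms in auto)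
  then show ?thesis using assms(7) by (rule mult_right_mono)
qed

lemma dhinv_formula:
  fixes h :: "real \<times> (real^'m) \<Rightarrow> real^'m^'m"
  assumes W: "open W" and mf: "metric_family_on h W" and p: "p \<in> W"
  shows "dx_hinv h p = - (hinv h p ** frechet_derivative h (at p) (1, 0) ** hinv h p)"
    "dy_hinv h i p = - (hinv h p ** frechet_derivative h (at p) (0, axis i 1) ** hinv h p)"
proof -
  have "frechet_derivative (hinv h) (at p) = (\<lambda>v. - (hinv h p ** frechet_derivative h (at p) v ** hinv h p))"
    by (rule frechet_derivative_at[OF hinv_deriv[OF W mf p], symmetric])
  then show "dx_hinv h p = - (hinv h p ** frechet_derivative h (at p) (1, 0) ** hinv h p)"
    "dy_hinv h i p = - (hinv h p ** frechet_derivative h (at p) (0, axis i 1) ** hinv h p)"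
    unfolding dx_hinv_def dy_hinv_def by simp_all
qed

lemma local_bounds:
  fixes h :: "real \<times> (real^'m) \<Rightarrow> real^'m^'m"
  assumes W: "open W" and mf: "metric_family_on h W" and p0: "p0 \<in> W"
    and e1: "eta0 \<bullet> (hinv h p0 *v eta0) = 1"
  shows "\<exists>\<delta>>0. \<exists>B>0. \<forall>p \<eta>. norm (p - p0) < \<delta> \<longrightarrow> norm (\<eta> - eta0) < \<delta> \<longrightarrow>
     p \<in> W \<and> 1/2 \<le> \<eta> \<bullet> (hinv h p *v \<eta>) \<and> \<eta> \<bullet> (hinv h p *v \<eta>) \<le> 2 \<and>
     \<bar>\<eta> \<bullet> (dx_hinv h p *v \<eta>)\<bar> \<le> B \<and> (\<forall>i. \<bar>\<eta> \<bullet> (dy_hinv h i p *v \<eta>)\<bar> \<le> B) \<and>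
     (\<forall>i. \<bar>(hinv h p *v \<eta>) $ i\<bar> \<le> B)"
proof -
  define K where "K = real (CARD('m) * CARD('m) * CARD('m))"
  define Kv where "Kv = real (CARD('m) * CARD('m))"
  define b where "b = norm (hinv h p0)"
  define f0 where "f0 q = frechet_derivative h (at q) (1, 0)" for q
  define fi where "fi i q = frechet_derivative h (at q) (0, axis i 1)" for i q
  define Cf where "Cf = norm (f0 p0) + 1 + (\<Sum>i\<in>UNIV. norm (fi i p0))"
  define E where "E = norm eta0 + 1"
  have K: "K \<ge> 0" "Kv \<ge> 0" "b \<ge> 0" "E \<ge> 0" unfolding K_def Kv_def b_def E_def by simp_all
  have sm: "smooth_on h W" using mf unfolding metric_family_on_def by blast
  have Cf0: "norm (f0 p0) + 1 \<le> Cf" unfolding Cf_def by (simp add: sum_nonneg)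
  have Cfi: "norm (fi i p0) + 1 \<le> Cf" for i
  proof -
    have "norm (fi i p0) \<le> (\<Sum>i\<in>UNIV. norm (fi i p0))" by (rule member_le_sum) auto
    then show ?thesis unfolding Cf_def using norm_ge_zero[of "f0 p0"] by linarith
  qed
  define Pb where "Pb q \<longleftrightarrow> q \<in> W \<and> norm (hinv h q) \<le> 2 * b \<and> norm (f0 q) \<le> Cf \<and> (\<forall>i. norm (fi i q) \<le> Cf)" for q
  have ev: "\<forall>\<^sub>F q in at p0. Pb q"
  proof -
    have e0: "\<forall>\<^sub>F q in at p0. q \<in> W \<and> norm (hinv h q) \<le> 2 * b"
      using hinv_near(1)[OF W mf p0] unfolding b_def by (auto elim: eventually_mono)
    have "(f0 \<longlongrightarrow> f0 p0) (at p0)" using smooth_h_dcont[OF W sm p0] unfolding f0_def isCont_def .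
    then have "\<forall>\<^sub>F q in at p0. dist (f0 q) (f0 p0) < 1" by (rule tendstoD) simp
    then have e2: "\<forall>\<^sub>F q in at p0. norm (f0 q) \<le> Cf"
    proof (rule eventually_mono)
      fix q assume "dist (f0 q) (f0 p0) < 1"
      then have "norm (f0 q) \<le> norm (f0 p0) + 1" using norm_triangle_sub[of "f0 q" "f0 p0"] by (simp add: dist_norm)
      then show "norm (f0 q) \<le> Cf" using Cf0 by linarith
    qed
    have "\<forall>\<^sub>F q in at p0. norm (fi i q) \<le> Cf" for i
    proof -
      have "(fi i \<longlongrightarrow> fi i p0) (at p0)" using smooth_h_dcont[OF W sm p0] unfolding fi_def isCont_def .
      then have "\<forall>\<^sub>F q in at p0. dist (fi i q) (fi i p0) < 1" by (rule tendstoD) simp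
      then show ?thesis
      proof (rule eventually_mono)
        fix q assume "dist (fi i q) (fi i p0) < 1"
        then have "norm (fi i q) \<le> norm (fi i p0) + 1" using norm_triangle_sub[of "fi i q" "fi i p0"] by (simp add: dist_norm)
        then show "norm (fi i q) \<le> Cf" using Cfi[of i] by linarith
      qed
    qed
    then have e3: "\<forall>\<^sub>F q in at p0. \<forall>i. norm (fi i q) \<le> Cf" by (rule eventually_all_finite)
    show ?thesis using e0 e2 e3 unfolding Pb_def by eventually_elim auto
  qed
  then obtain d1 where d1: "d1 > 0" "\<And>q. 0 < dist q p0 \<Longrightarrow> dist q p0 < d1 \<Longrightarrow> Pb q"
    unfolding eventually_at by auto
  have Pb0: "Pb p0"
  proof -
    have "norm (f0 p0) \<le> Cf" using Cf0 by linarith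
    moreover have "\<forall>i. norm (fi i p0) \<le> Cf" proof
      fix i show "norm (fi i p0) \<le> Cf" using Cfi[of i] by linarith
    qed
    moreover have "norm (hinv h p0) \<le> 2 * b" unfolding b_def by simp
    ultimately show ?thesis unfolding Pb_def using p0 by blast
  qed
  have Pbq: "Pb q" if "dist q p0 < d1" for q
    using d1 that Pb0 by (cases "q = p0") auto
  define F where "F z = snd z \<bullet> (hinv h (fst z) *v snd z)" for z :: "(real \<times> (real^'m)) \<times> (real^'m)"
  have "isCont F (p0, eta0)"
  proof -
    have c1: "isCont (\<lambda>z. hinv h (fst z)) (p0, eta0)"
    proof (rule isCont_o2[where f=fst and a="(p0, eta0)" and g="hinv h"])
      show "isCont fst (p0, eta0)" by (intro continuous_intros)
      show "isCont (hinv h) (fst (p0, eta0))" using hinv_cont(2)[OF W mf p0] by simp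
    qed
    have c2: "isCont (\<lambda>z::(real \<times> (real^'m)) \<times> (real^'m). snd z) (p0, eta0)"
      by (intro continuous_intros)
    have "isCont (\<lambda>z. hinv h (fst z) *v snd z) (p0, eta0)"
      using bounded_bilinear.continuous[OF bb_mv c1 c2] .
    then show ?thesis unfolding F_def by (intro continuous_inner c2)
  qed
  then obtain d2 where d2: "d2 > 0" "\<And>z. dist z (p0, eta0) < d2 \<Longrightarrow> dist (F z) (F (p0, eta0)) < 1/2"
  proof -
    from \<open>isCont F (p0, eta0)\<close> have "\<forall>e>0. \<exists>d>0. \<forall>z. dist z (p0, eta0) < d \<longrightarrow> dist (F z) (F (p0, eta0)) < e"
      unfolding continuous_at_eps_delta .
    then have "\<exists>d>0. \<forall>z. dist z (p0, eta0) < d \<longrightarrow> dist (F z) (F (p0, eta0)) < 1/2"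
      by (rule allE[where x="1/2"]) simp
    then show ?thesis using that by blast
  qed
  define \<delta> where "\<delta> = min (min d1 (d2/2)) 1"
  define B where "B = E * E * (2 * b * Cf * 2 * b * K * K) * Kv + 2 * b * E * Kv + 1"
  have Cfp: "Cf \<ge> 0" using Cf0 norm_ge_zero[of "f0 p0"] by linarith
  have P1: "0 \<le> E * E * (2 * b * Cf * 2 * b * K * K) * Kv" using K Cfp by simp
  have P2: "0 \<le> 2 * b * E * Kv" using K by simp
  have B1: "E * E * (2 * b * Cf * 2 * b * K * K) * Kv \<le> B" "2 * b * E * Kv \<le> B"
    unfolding B_def using P1 P2 by linarith+
  have Bpos: "B > 0" unfolding B_def using P1 P2 by linarith
  have dpos: "\<delta> > 0" unfolding \<delta>_def using d1 d2 by auto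
  have main: "p \<in> W \<and> 1/2 \<le> \<eta> \<bullet> (hinv h p *v \<eta>) \<and> \<eta> \<bullet> (hinv h p *v \<eta>) \<le> 2 \<and>
     \<bar>\<eta> \<bullet> (dx_hinv h p *v \<eta>)\<bar> \<le> B \<and> (\<forall>i. \<bar>\<eta> \<bullet> (dy_hinv h i p *v \<eta>)\<bar> \<le> B) \<and>
     (\<forall>i. \<bar>(hinv h p *v \<eta>) $ i\<bar> \<le> B)"
    if pn: "norm (p - p0) < \<delta>" and en: "norm (\<eta> - eta0) < \<delta>" for p \<eta>
  proof -
    have "Pb p" using pn \<delta>_def by (intro Pbq) (simp add: dist_norm)
    then have pW: "p \<in> W" and hb: "norm (hinv h p) \<le> 2 * b" and fb: "norm (f0 p) \<le> Cf" "\<And>i. norm (fi i p) \<le> Cf"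
      unfolding Pb_def by auto
    have "\<delta> \<le> 1" unfolding \<delta>_def by simp
    then have nE: "norm \<eta> \<le> E" using en norm_triangle_sub[of \<eta> eta0] unfolding E_def by linarith
    have "dist (p, \<eta>) (p0, eta0) \<le> norm (p - p0) + norm (\<eta> - eta0)"
      using norm_Pair_le[of "p - p0" "\<eta> - eta0"] by (simp add: dist_norm)
    also have "\<dots> < d2" using pn en unfolding \<delta>_def by linarith
    finally have "dist (F (p, \<eta>)) (F (p0, eta0)) < 1/2" by (rule d2(2))
    then have "\<bar>\<eta> \<bullet> (hinv h p *v \<eta>) - 1\<bar> < 1/2" unfolding F_def using e1 by (simp add: dist_real_def)
    then have r1: "1/2 \<le> \<eta> \<bullet> (hinv h p *v \<eta>)" "\<eta> \<bullet> (hinv h p *v \<eta>) \<le> 2" by linarith+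
    have qb: "\<bar>\<eta> \<bullet> (M *v \<eta>)\<bar> \<le> B" if "norm M \<le> 2 * b * Cf * 2 * b * K * K" for M
    proof -
      have "\<bar>\<eta> \<bullet> (M *v \<eta>)\<bar> \<le> norm \<eta> * norm \<eta> * norm M * Kv" unfolding Kv_def by (rule quad_bound)
      also have "\<dots> \<le> E * E * (2 * b * Cf * 2 * b * K * K) * Kv"
        using nE that K by (intro mono3) auto
      finally show ?thesis using B1 by linarith
    qed
    have mb: "norm (hinv h p ** A ** hinv h p) \<le> 2 * b * Cf * 2 * b * K * K" if "norm A \<le> Cf" for A
    proof -
      have "norm (hinv h p ** A ** hinv h p) \<le> norm (hinv h p) * norm A * norm (hinv h p) * K * K"
        unfolding K_def by (rule mmm_bound)
      also have "\<dots> = norm (hinv h p) * norm A * norm (hinv h p) * (K * K)" by (simp only: mult.assoc)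
      also have "\<dots> \<le> (2 * b) * Cf * (2 * b) * (K * K)"
        using hb that K by (intro mono3) auto
      also have "\<dots> = 2 * b * Cf * 2 * b * K * K" by (simp only: mult.assoc)
      finally show ?thesis .
    qed
    have r2: "\<bar>\<eta> \<bullet> (dx_hinv h p *v \<eta>)\<bar> \<le> B"
      using qb[of "- (hinv h p ** f0 p ** hinv h p)"] mb[OF fb(1)] unfolding dhinv_formula(1)[OF W mf pW] f0_def by simp
    have r3: "\<forall>i. \<bar>\<eta> \<bullet> (dy_hinv h i p *v \<eta>)\<bar> \<le> B"
    proof
      fix i show "\<bar>\<eta> \<bullet> (dy_hinv h i p *v \<eta>)\<bar> \<le> B"
        using qb[of "- (hinv h p ** fi i p ** hinv h p)"] mb[OF fb(2)[of i]] unfolding dhinv_formula(2)[OF W mf pW] fi_def by simp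
    qed
    have r4: "\<forall>i. \<bar>(hinv h p *v \<eta>) $ i\<bar> \<le> B"
    proof
      fix i
      have "\<bar>(hinv h p *v \<eta>) $ i\<bar> \<le> norm (hinv h p *v \<eta>)" by (rule component_le_norm_cart)
      also have "\<dots> \<le> norm (hinv h p) * norm \<eta> * Kv" unfolding Kv_def by (rule norm_mv)
      also have "\<dots> \<le> 2 * b * E * Kv" using hb nE K
        by (intro mult_right_mono mult_mono) auto
      finally show "\<bar>(hinv h p *v \<eta>) $ i\<bar> \<le> B" using B1 by linarith
    qed
    show ?thesis using pW r1 r2 r3 r4 by blast
  qed
  show ?thesis
    by (rule exI[of _ \<delta>], rule conjI[OF dpos], rule exI[of _ B], rule conjI[OF Bpos]) (use main in blast)
qed

lemma nonincr_on:
  fixes f f' :: "real \<Rightarrow> real"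
  assumes "0 \<le> a" "a \<le> b" "b \<le> T"
    and d: "\<forall>t\<in>{0..T}. (f has_real_derivative f' t) (at t within {0..T})"
    and n: "\<And>t. a < t \<Longrightarrow> t < b \<Longrightarrow> f' t \<le> 0"
  shows "f b \<le> f a"
proof -
  have c: "continuous_on {0..T} f" using d by (intro DERIV_continuous_on) auto
  have "(\<lambda>t. - f t) a \<le> (\<lambda>t. - f t) b"
  proof (rule DERIV_nonneg_imp_increasing_open[OF assms(2)])
    fix t assume t: "a < t" "t < b"
    have "(f has_real_derivative f' t) (at t within {0..T})" using d t assms by auto
    moreover have "at t within {0..T} = at t" using t assms by (intro at_within_Icc_at) auto
    ultimately have "(f has_real_derivative f' t) (at t)" by simp
    then have "((\<lambda>t. - f t) has_real_derivative - f' t) (at t)" by (rule DERIV_minus)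
    then show "\<exists>y. ((\<lambda>t. - f t) has_real_derivative y) (at t) \<and> 0 \<le> y" using n[OF t] by auto
  next
    show "continuous_on {a..b} (\<lambda>t. - f t)"
      using c assms by (intro continuous_intros) (auto intro: continuous_on_subset)
  qed
  then show ?thesis by simp
qed

lemma x_nonneg:
  fixes x xi :: "real \<Rightarrow> real"
  assumes T: "0 < T" and s: "0 < s" and x0: "x 0 = 0" and xT: "x T = 0" and xi0: "xi 0 = s"
    and dx: "\<forall>t\<in>{0..T}. (x has_real_derivative xi t) (at t within {0..T})"
    and nz: "\<forall>t\<in>{0<..<T}. x t \<noteq> 0"
  shows "\<forall>t\<in>{0<..<T}. 0 < x t" "\<forall>t\<in>{0..T}. 0 \<le> x t"
proof -
  have c: "continuous_on {0..T} x" using dx by (intro DERIV_continuous_on) auto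
  obtain d where d: "d > 0" "\<forall>h>0. 0 + h \<in> {0..T} \<longrightarrow> h < d \<longrightarrow> x 0 < x (0 + h)"
    using has_real_derivative_pos_inc_right[of x s 0 "{0..T}"] dx T s xi0 by auto
  define h0 where "h0 = min (d/2) (T/2)"
  have h0: "0 < h0" "h0 < T" "x h0 > 0" using d T x0 unfolding h0_def by auto
  show A: "\<forall>t\<in>{0<..<T}. 0 < x t"
  proof
    fix t assume t: "t \<in> {0<..<T}"
    show "0 < x t"
    proof (rule ccontr)
      assume "\<not> 0 < x t"
      then have xt: "x t < 0" using nz t by force
      show False
      proof (cases "h0 \<le> t")
        case True
        obtain u where "u \<ge> h0" "u \<le> t" "x u = 0"
          using IVT2'[of x t 0 h0] xt h0 True c t by (force intro: continuous_on_subset)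
        then show False using nz t h0 by force
      next
        case False
        obtain u where "u \<ge> t" "u \<le> h0" "x u = 0"
          using IVT'[of x t 0 h0] xt h0 False c t by (force intro: continuous_on_subset)
        then show False using nz t h0 by force
      qed
    qed
  qed
  show "\<forall>t\<in>{0..T}. 0 \<le> x t"
  proof
    fix t assume "t \<in> {0..T}"
    then have "t = 0 \<or> t = T \<or> t \<in> {0<..<T}" by auto
    then show "0 \<le> x t" using A x0 xT by (metis less_eq_real_def order_refl)
  qed
qed

lemma xbound:
  fixes x xi g :: "real \<Rightarrow> real" and G :: "real \<Rightarrow> bool"
  assumes T: "0 < T" and s: "0 < s" and x0: "x 0 = 0" and xi0: "xi 0 = s"
    and dx: "\<forall>t\<in>{0..T}. (x has_real_derivative xi t) (at t within {0..T})"
    and dxi: "\<forall>t\<in>{0..T}. (xi has_real_derivative (- g t * x t)) (at t within {0..T})"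
    and xpos: "\<forall>t\<in>{0..T}. 0 \<le> x t"
    and gb: "\<forall>t\<in>{0..T}. G t \<longrightarrow> 1/4 \<le> g t \<and> g t \<le> 3"
    and t1: "t1 \<in> {0..T}" and hyp: "\<forall>\<tau>\<in>{0..<t1}. G \<tau>"
  shows "x t1 \<le> 2* s \<and> -(4* s) \<le> xi t1 \<and> xi t1 \<le> s"
proof -
  have mono: "xi b \<le> xi a" if "0 \<le> a" "a \<le> b" "b \<le> t1" for a b
  proof (rule nonincr_on[OF that(1,2), of T xi "\<lambda>t. - g t * x t"])
    show "b \<le> T" using that t1 by auto
    show "\<forall>t\<in>{0..T}. (xi has_real_derivative - g t * x t) (at t within {0..T})" by fact
    fix t assume "a < t" "t < b"
    then have "G t" "t \<in> {0..T}" using hyp that t1 by auto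
    then have "g t \<ge> 0" "x t \<ge> 0" using gb xpos by force+
    then show "- g t * x t \<le> 0" by simp
  qed
  have cxi: "continuous_on {0..T} xi" using dxi by (intro DERIV_continuous_on) auto
  have A: "x c \<le> 2* s" if c: "c \<in> {0..t1}" "0 \<le> xi c" for c
  proof -
    define F where "F t = (xi t)^2 + (x t)^2/4" for t
    have dF: "\<forall>t\<in>{0..T}. (F has_real_derivative (2 * xi t * (- g t * x t) + x t * xi t / 2)) (at t within {0..T})"
    proof
      fix t assume t: "t \<in> {0..T}"
      have "((\<lambda>t. (xi t)^2 + (x t)^2/4) has_real_derivative (2 * xi t * (- g t * x t) + x t * xi t / 2)) (at t within {0..T})"
        using dx dxi t by (auto intro!: derivative_eq_intros)
      then show "(F has_real_derivative (2 * xi t * (- g t * x t) + x t * xi t / 2)) (at t within {0..T})"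
        unfolding F_def[abs_def] .
    qed
    have "F c \<le> F 0"
    proof (rule nonincr_on[of 0 c T F, OF _ _ _ dF])
      show "0 \<le> (0::real)" "0 \<le> c" "c \<le> T" using c t1 by auto
      fix t assume t: "0 < t" "t < c"
      then have "G t" "t \<in> {0..T}" using hyp c t1 by auto
      then have g: "g t \<ge> 1/4" "x t \<ge> 0" using gb xpos by force+
      have "xi t \<ge> xi c" using mono[of t c] t c by auto
      then have xit: "xi t \<ge> 0" using c by linarith
      have "2 * xi t * (- g t * x t) + x t * xi t / 2 = - (x t * xi t) * (2 * g t - 1/2)"
        by (simp add: algebra_simps)
      also have "\<dots> \<le> 0" using g xit by (intro mult_nonpos_nonneg) auto
      finally show "2 * xi t * (- g t * x t) + x t * xi t / 2 \<le> 0" .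
    qed
    then have "(xi c)^2 + (x c)^2 / 4 \<le> s^2" unfolding F_def using x0 xi0 by simp
    then have "(x c)^2 / 4 \<le> s^2" using zero_le_power2[of "xi c"] by linarith
    then have "(x c)^2 \<le> (2* s)^2" by (simp add: power_mult_distrib)
    then show "x c \<le> 2* s" using s power2_le_imp_le[of "x c" "2* s"] by simp
  qed
  show ?thesis
  proof (cases "0 \<le> xi t1")
    case True
    then show ?thesis using A[of t1] t1 mono[of 0 t1] xi0 s by auto
  next
    case False
    obtain c where c: "0 \<le> c" "c \<le> t1" "xi c = 0"
      using IVT2'[of xi t1 0 0] False xi0 s t1 cxi by (force intro: continuous_on_subset)
    have xc: "x c \<le> 2* s" using A[of c] c by auto
    have "x t1 \<le> x c"
    proof (rule nonincr_on[OF c(1,2), of T x xi])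
      show "t1 \<le> T" using t1 by auto
      show "\<forall>t\<in>{0..T}. (x has_real_derivative xi t) (at t within {0..T})" by fact
      fix t assume "c < t" "t < t1"
      then show "xi t \<le> 0" using mono[of c t] c by auto
    qed
    define F where "F t = (xi t)^2 + 3 * (x t)^2" for t
    have dF: "\<forall>t\<in>{0..T}. (F has_real_derivative (2 * xi t * (- g t * x t) + 3 * (2 * x t * xi t))) (at t within {0..T})"
    proof
      fix t assume t: "t \<in> {0..T}"
      have "((\<lambda>t. (xi t)^2 + 3 * (x t)^2) has_real_derivative (2 * xi t * (- g t * x t) + 3 * (2 * x t * xi t))) (at t within {0..T})"
        using dx dxi t by (auto intro!: derivative_eq_intros)
      then show "(F has_real_derivative (2 * xi t * (- g t * x t) + 3 * (2 * x t * xi t))) (at t within {0..T})"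
        unfolding F_def[abs_def] .
    qed
    have "F t1 \<le> F c"
    proof (rule nonincr_on[OF c(1,2), of T F, OF _ dF])
      show "t1 \<le> T" using t1 by auto
      fix t assume t: "c < t" "t < t1"
      then have "G t" "t \<in> {0..T}" using hyp c t1 by auto
      then have g: "g t \<le> 3" "x t \<ge> 0" using gb xpos by force+
      have "xi t \<le> 0" using mono[of c t] t c by auto
      have "2 * xi t * (- g t * x t) + 3 * (2 * x t * xi t) = 2 * (x t * xi t) * (3 - g t)"
        by (simp add: algebra_simps)
      also have "\<dots> \<le> 0"
      proof -
        have "x t * xi t \<le> 0" using g \<open>xi t \<le> 0\<close> by (simp add: mult_nonneg_nonpos)
        then show ?thesis using g by (simp add: mult_nonpos_nonneg)
      qed
      finally show "2 * xi t * (- g t * x t) + 3 * (2 * x t * xi t) \<le> 0" .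
    qed
    then have "(xi t1)^2 + 3 * (x t1)^2 \<le> 3 * (x c)^2" unfolding F_def using c by simp
    then have "(xi t1)^2 \<le> 3 * (x c)^2" using zero_le_power2[of "x t1"] by linarith
    also have "\<dots> \<le> 3 * (2* s)^2" using xc xpos c t1 by (intro mult_left_mono power_mono) auto
    finally have "(xi t1)^2 \<le> 12 * s^2" by (simp add: power_mult_distrib)
    then have "(xi t1)^2 \<le> 16 * s^2" using zero_le_power2[of s] by linarith
    moreover have "(4 * s)^2 = 16 * s^2" by (simp add: power_mult_distrib)
    ultimately have "(xi t1)^2 \<le> (4 * s)^2" by simp
    then have "\<bar>xi t1\<bar> \<le> 4 * s" using s power2_le_imp_le[of "\<bar>xi t1\<bar>" "4 * s"] by simp
    then have "-(4* s) \<le> xi t1" by linarith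
    then show ?thesis using \<open>x t1 \<le> x c\<close> xc False s by auto
  qed
qed

lemma drift:
  fixes x xi g z w :: "real \<Rightarrow> real" and G :: "real \<Rightarrow> bool"
  assumes T: "0 < T" and s: "0 < s" and x0: "x 0 = 0" and xi0: "xi 0 = s"
    and dx: "\<forall>t\<in>{0..T}. (x has_real_derivative xi t) (at t within {0..T})"
    and dxi: "\<forall>t\<in>{0..T}. (xi has_real_derivative (- g t * x t)) (at t within {0..T})"
    and xpos: "\<forall>t\<in>{0..T}. 0 \<le> x t"
    and gb: "\<forall>t\<in>{0..T}. G t \<longrightarrow> 1/4 \<le> g t \<and> g t \<le> 3"
    and dz: "\<forall>t\<in>{0..T}. (z has_real_derivative ((x t)^2 * w t)) (at t within {0..T})"
    and wb: "\<forall>t\<in>{0..T}. G t \<longrightarrow> \<bar>w t\<bar> \<le> B" and B: "0 \<le> B"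
    and t1: "t1 \<in> {0..T}" and hyp: "\<forall>\<tau>\<in>{0..<t1}. G \<tau>"
  shows "\<bar>z t1 - z 0\<bar> \<le> 40 * B * s^2"
proof -
  have xb: "x t1 \<le> 2* s \<and> -(4* s) \<le> xi t1 \<and> xi t1 \<le> s"
    by (rule xbound[OF T s x0 xi0 dx dxi xpos gb t1 hyp])
  have pt: "G t \<and> t \<in> {0..T} \<and> 0 \<le> x t \<and> x t \<le> 2* s \<and> 1/4 \<le> g t \<and> g t \<le> 3 \<and> \<bar>w t\<bar> \<le> B"
    if t: "0 < t" "t < t1" for t
  proof -
    have "G t" "t \<in> {0..T}" using hyp t t1 by auto
    moreover have "x t \<le> 2* s"
      using xbound[OF T s x0 xi0 dx dxi xpos gb, of t] hyp t t1 by auto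
    ultimately show ?thesis using gb wb xpos by auto
  qed
  have key: "x t ^2 * \<bar>w t\<bar> \<le> 8 * s * B * (g t * x t)" if t: "0 < t" "t < t1" for t
  proof -
    note p = pt[OF t]
    have "x t ^2 * \<bar>w t\<bar> \<le> x t ^ 2 * B" using p by (intro mult_left_mono) auto
    also have "\<dots> = x t * (x t * B)" by (simp add: power2_eq_square)
    also have "\<dots> \<le> (2* s) * (x t * B)" using p B by (intro mult_right_mono) auto
    also have "\<dots> = 8 * s * B * (1/4 * x t)" by simp
    also have "\<dots> \<le> 8 * s * B * (g t * x t)" using p B s by (intro mult_left_mono mult_right_mono) auto
    finally show ?thesis .
  qed
  have up: "(\<lambda>t. z t + 8* s*B * xi t) t1 \<le> (\<lambda>t. z t + 8* s*B * xi t) 0"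
  proof (rule nonincr_on[of 0 t1 T _ "\<lambda>t. (x t)^2 * w t + 8* s*B * (- g t * x t)"])
    show "0 \<le> (0::real)" "0 \<le> t1" "t1 \<le> T" using t1 by auto
    show "\<forall>t\<in>{0..T}. ((\<lambda>t. z t + 8 * s * B * xi t) has_real_derivative (x t)\<^sup>2 * w t + 8 * s * B * (- g t * x t)) (at t within {0..T})"
      using dz dxi by (auto intro!: derivative_eq_intros)
    fix t assume t: "0 < t" "t < t1"
    have "(x t)^2 * w t \<le> x t ^2 * \<bar>w t\<bar>" by (intro mult_left_mono) auto
    then show "(x t)\<^sup>2 * w t + 8 * s * B * (- g t * x t) \<le> 0" using key[OF t] by simp
  qed
  have lo: "(\<lambda>t. z t - 8* s*B * xi t) 0 \<le> (\<lambda>t. z t - 8* s*B * xi t) t1"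
  proof -
    have "(\<lambda>t. - (z t - 8* s*B * xi t)) t1 \<le> (\<lambda>t. - (z t - 8* s*B * xi t)) 0"
    proof (rule nonincr_on[of 0 t1 T _ "\<lambda>t. - ((x t)^2 * w t - 8* s*B * (- g t * x t))"])
      show "0 \<le> (0::real)" "0 \<le> t1" "t1 \<le> T" using t1 by auto
      show "\<forall>t\<in>{0..T}. ((\<lambda>t. - (z t - 8 * s * B * xi t)) has_real_derivative - ((x t)\<^sup>2 * w t - 8 * s * B * (- g t * x t))) (at t within {0..T})"
        using dz dxi by (auto intro!: derivative_eq_intros)
      fix t assume t: "0 < t" "t < t1"
      have "- ((x t)^2 * w t) \<le> (x t)^2 * \<bar>w t\<bar>"
        by (metis abs_ge_minus_self mult_left_mono mult_minus_left mult_minus_right zero_le_power2)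
      then show "- ((x t)\<^sup>2 * w t - 8 * s * B * (- g t * x t)) \<le> 0" using key[OF t] by simp
    qed
    then show ?thesis by simp
  qed
  have "8* s*B * (s - xi t1) \<le> 8* s*B*(5* s)" using xb s B by (intro mult_left_mono) auto
  moreover have "8 * s * B * (s - xi t1) = 8 * s * B * s - 8 * s * B * xi t1" by (simp add: right_diff_distrib)
  moreover have "8 * s * B * (5 * s) = 40 * B * s^2" by (simp add: power2_eq_square)
  ultimately have e1: "8 * s * B * s - 8 * s * B * xi t1 \<le> 40 * B * s^2" by linarith
  have "0 \<le> 8 * s * B * (s - xi t1)" using xb s B by simp
  then have e2: "0 \<le> 8 * s * B * s - 8 * s * B * xi t1" by (simp add: right_diff_distrib)
  have "z t1 - z 0 \<le> 40 * B * s^2" "z 0 - z t1 \<le> 40 * B * s^2" using up lo xi0 e1 e2 by simp_all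
  then show ?thesis by (simp add: abs_le_iff)
qed

lemma vec_comp_deriv:
  fixes f :: "real \<Rightarrow> real^'n"
  assumes "(f has_vector_derivative v) F"
  shows "((\<lambda>t. f t $ i) has_real_derivative v $ i) F"
proof -
  have "((\<lambda>t. f t $ i) has_derivative (\<lambda>x. (x *\<^sub>R v) $ i)) F"
    by (rule bounded_linear.has_derivative[OF bounded_linear_vec_nth]) (use assms in \<open>simp add: has_vector_derivative_def\<close>)
  moreover have "(\<lambda>x. (x *\<^sub>R v) $ i) = (*) (v $ i)" by (auto simp: mult.commute)
  ultimately show ?thesis by (simp add: has_field_derivative_def)
qed

lemma norm_le_card_bound:
  fixes v :: "real^'n"
  assumes "\<And>i. \<bar>v $ i\<bar> \<le> c"
  shows "norm v \<le> real CARD('n) * c"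
proof -
  have "norm v \<le> (\<Sum>i\<in>UNIV. \<bar>v $ i\<bar>)" by (rule norm_le_l1_cart)
  also have "\<dots> \<le> (\<Sum>i\<in>(UNIV::'n set). c)" by (intro sum_mono assms)
  finally show ?thesis by simp
qed

lemma eps_arith:
  fixes r B n s :: real
  assumes "r > 0" "B > 0" "n \<ge> 1" "0 < s" "s < 1" "s < r / (80 * B * n)"
  shows "n * (40 * B * s^2) < r / 2"
proof -
  have "80 * B * n > 0" using assms by simp
  then have "s * (80 * B * n) < r" using assms(6) by (simp add: pos_less_divide_eq)
  then have a: "80 * B * n * s < r" by (simp add: algebra_simps)
  have "n * (40 * B * s^2) = (80 * B * n * s) * s / 2" by (simp add: power2_eq_square algebra_simps)
  also have "\<dots> < r * 1 / 2"
  proof -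
    have "(80 * B * n * s) * s < r * 1"
      using a assms by (intro mult_strict_mono) auto
    then show ?thesis by simp
  qed
  finally show ?thesis by simp
qed

lemma main_fixed:
  fixes h :: "real \<times> (real^'m) \<Rightarrow> real^'m^'m"
  assumes W: "open W" and mf: "metric_family_on h W" and p0: "(0, y0) \<in> W"
    and e1: "eta0 \<bullet> (hinv h (0, y0) *v eta0) = 1"
  shows "\<exists>\<epsilon>>0. \<forall>s\<in>{0<..<\<epsilon>}. \<forall>x y xi eta T. short_geodesic h W y0 eta0 s x y xi eta T \<longrightarrow>
           (\<forall>t\<in>{0<..<T}. deriv xi t < 0) \<and> (\<forall>t\<in>{0..T}. x t \<le> 2 * s)"
proof -
  obtain \<delta> B where \<delta>: "\<delta> > 0" and B: "B > 0" and LB: "\<And>p \<eta>. norm (p - (0, y0)) < \<delta> \<Longrightarrow> norm (\<eta> - eta0) < \<delta> \<Longrightarrow>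
     p \<in> W \<and> 1/2 \<le> \<eta> \<bullet> (hinv h p *v \<eta>) \<and> \<eta> \<bullet> (hinv h p *v \<eta>) \<le> 2 \<and>
     \<bar>\<eta> \<bullet> (dx_hinv h p *v \<eta>)\<bar> \<le> B \<and> (\<forall>i. \<bar>\<eta> \<bullet> (dy_hinv h i p *v \<eta>)\<bar> \<le> B) \<and>
     (\<forall>i. \<bar>(hinv h p *v \<eta>) $ i\<bar> \<le> B)"
    using local_bounds[OF W mf p0 e1] by blast
  define n where "n = real CARD('m)"
  have n: "n \<ge> 1" unfolding n_def by simp
  define r where "r = min (\<delta>/3) (1/(2*B))"
  define \<epsilon> where "\<epsilon> = min (r/4) (min 1 (r/(80*B*n)))"
  have r: "r > 0" "r < \<delta>" "3 * r \<le> \<delta>" "r * B \<le> 1/2" using \<delta> B unfolding r_def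
    by (auto simp: min_def field_simps)
  have \<epsilon>: "\<epsilon> > 0" "\<epsilon> \<le> r/4" "\<epsilon> \<le> 1" "\<epsilon> \<le> r/(80*B*n)" unfolding \<epsilon>_def using r B n by auto
  show ?thesis
  proof (rule exI[of _ \<epsilon>], rule conjI[OF \<epsilon>(1)], intro ballI allI impI)
    fix s x y xi eta T
    assume s: "s \<in> {0<..<\<epsilon>}" and sg: "short_geodesic h W y0 eta0 s x y xi eta T"
    have s0: "0 < s" "s < \<epsilon>" using s by auto
    note sgd = sg[unfolded short_geodesic_def]
    have T0: "0 < T" and x0: "x 0 = 0" and yy0: "y 0 = y0" and xi0: "xi 0 = s" and ee0: "eta 0 = eta0"
      and xT: "x T = 0" and nz: "\<forall>t\<in>{0<..<T}. x t \<noteq> 0" using sgd by auto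
    have D: "\<And>t. t \<in> {0..T} \<Longrightarrow> (x t, y t) \<in> W \<and>
        (x has_real_derivative xi t) (at t within {0..T}) \<and>
        (y has_vector_derivative ((x t)\<^sup>2 *\<^sub>R (hinv h (x t, y t) *v eta t))) (at t within {0..T}) \<and>
        (xi has_real_derivative
            (- x t * (eta t \<bullet> (hinv h (x t, y t) *v eta t))
             - (1/2) * (x t)\<^sup>2 * (eta t \<bullet> (dx_hinv h (x t, y t) *v eta t)))) (at t within {0..T}) \<and>
        (eta has_vector_derivative
            (\<chi> i. - (1/2) * (x t)\<^sup>2 * (eta t \<bullet> (dy_hinv h i (x t, y t) *v eta t)))) (at t within {0..T})"
      using sgd by blast
    define q where "q t = eta t \<bullet> (hinv h (x t, y t) *v eta t)" for t
    define pp where "pp t = eta t \<bullet> (dx_hinv h (x t, y t) *v eta t)" for t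
    define g where "g t = q t + 1/2 * x t * pp t" for t
    have dx: "\<forall>t\<in>{0..T}. (x has_real_derivative xi t) (at t within {0..T})" using D by blast
    have dxi: "\<forall>t\<in>{0..T}. (xi has_real_derivative (- g t * x t)) (at t within {0..T})"
    proof
      fix t assume t: "t \<in> {0..T}"
      have "- x t * q t - (1/2) * (x t)\<^sup>2 * pp t = - g t * x t"
        unfolding g_def by (simp add: power2_eq_square algebra_simps)
      then show "(xi has_real_derivative (- g t * x t)) (at t within {0..T})"
        using D[OF t] unfolding q_def pp_def by metis
    qed
    have xpos: "\<forall>t\<in>{0<..<T}. 0 < x t" and xnn: "\<forall>t\<in>{0..T}. 0 \<le> x t"
      using x_nonneg[OF T0 s0(1) x0 xT xi0 dx nz] by auto
    define G where "G t \<longleftrightarrow> \<bar>x t\<bar> < r \<and> norm (y t - y0) < r \<and> norm (eta t - eta0) < r" for t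
    have LBt: "1/2 \<le> q t \<and> q t \<le> 2 \<and> \<bar>pp t\<bar> \<le> B \<and>
       (\<forall>i. \<bar>eta t \<bullet> (dy_hinv h i (x t, y t) *v eta t)\<bar> \<le> B) \<and>
       (\<forall>i. \<bar>(hinv h (x t, y t) *v eta t) $ i\<bar> \<le> B)" if "G t" for t
    proof -
      have "norm ((x t, y t) - (0, y0)) \<le> norm (x t) + norm (y t - y0)"
        using norm_Pair_le[of "x t" "y t - y0"] by simp
      also have "\<dots> < \<delta>" using that r unfolding G_def by simp
      finally have "norm ((x t, y t) - (0, y0)) < \<delta>" .
      moreover have "norm (eta t - eta0) < \<delta>" using that r unfolding G_def by simp
      ultimately show ?thesis using LB unfolding q_def pp_def by blast
    qed
    have gb: "\<forall>t\<in>{0..T}. G t \<longrightarrow> 1/4 \<le> g t \<and> g t \<le> 3"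
    proof (intro ballI impI)
      fix t assume t: "t \<in> {0..T}" and Gt: "G t"
      note l = LBt[OF Gt]
      have "\<bar>x t * pp t\<bar> \<le> r * B"
        unfolding abs_mult using Gt l B unfolding G_def by (intro mult_mono) auto
      then have "\<bar>x t * pp t\<bar> \<le> 1/2" using r by linarith
      then have "-(1/2) \<le> x t * pp t" "x t * pp t \<le> 1/2" by (auto simp: abs_le_iff)
      moreover have "g t = q t + 1/2 * (x t * pp t)" unfolding g_def by simp
      ultimately show "1/4 \<le> g t \<and> g t \<le> 3" using l by linarith
    qed
    have dyi: "\<forall>t\<in>{0..T}. ((\<lambda>t. y t $ i) has_real_derivative (x t)^2 * ((hinv h (x t, y t) *v eta t) $ i)) (at t within {0..T})" for i
    proof
      fix t assume t: "t \<in> {0..T}"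
      show "((\<lambda>t. y t $ i) has_real_derivative (x t)^2 * ((hinv h (x t, y t) *v eta t) $ i)) (at t within {0..T})"
      proof -
        have "(y has_vector_derivative ((x t)\<^sup>2 *\<^sub>R (hinv h (x t, y t) *v eta t))) (at t within {0..T})"
          using D[OF t] by blast
        then have "((\<lambda>t. y t $ i) has_real_derivative ((x t)\<^sup>2 *\<^sub>R (hinv h (x t, y t) *v eta t)) $ i) (at t within {0..T})"
          by (rule vec_comp_deriv)
        then show ?thesis by simp
      qed
    qed
    have detai: "\<forall>t\<in>{0..T}. ((\<lambda>t. eta t $ i) has_real_derivative (x t)^2 * (-(1/2) * (eta t \<bullet> (dy_hinv h i (x t, y t) *v eta t)))) (at t within {0..T})" for i
    proof
      fix t assume t: "t \<in> {0..T}"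
      have "((\<lambda>t. eta t $ i) has_real_derivative (\<chi> i. - (1/2) * (x t)\<^sup>2 * (eta t \<bullet> (dy_hinv h i (x t, y t) *v eta t))) $ i) (at t within {0..T})"
      proof -
        have "(eta has_vector_derivative
            (\<chi> i. - (1/2) * (x t)\<^sup>2 * (eta t \<bullet> (dy_hinv h i (x t, y t) *v eta t)))) (at t within {0..T})"
          using D[OF t] by blast
        then show ?thesis by (rule vec_comp_deriv)
      qed
      moreover have "(\<chi> i. - (1/2) * (x t)\<^sup>2 * (eta t \<bullet> (dy_hinv h i (x t, y t) *v eta t))) $ i = (x t)^2 * (-(1/2) * (eta t \<bullet> (dy_hinv h i (x t, y t) *v eta t)))"
        by simp
      ultimately show "((\<lambda>t. eta t $ i) has_real_derivative (x t)^2 * (-(1/2) * (eta t \<bullet> (dy_hinv h i (x t, y t) *v eta t)))) (at t within {0..T})"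
        by simp
    qed
    have wy: "\<forall>t\<in>{0..T}. G t \<longrightarrow> \<bar>(hinv h (x t, y t) *v eta t) $ i\<bar> \<le> B" for i
      using LBt by blast
    have weta: "\<forall>t\<in>{0..T}. G t \<longrightarrow> \<bar>-(1/2) * (eta t \<bullet> (dy_hinv h i (x t, y t) *v eta t))\<bar> \<le> B" for i
    proof (intro ballI impI)
      fix t assume "t \<in> {0..T}" "G t"
      then have "\<bar>eta t \<bullet> (dy_hinv h i (x t, y t) *v eta t)\<bar> \<le> B" using LBt by blast
      then show "\<bar>-(1/2) * (eta t \<bullet> (dy_hinv h i (x t, y t) *v eta t))\<bar> \<le> B" using B by (simp add: abs_mult)
    qed
    have Bn: "0 \<le> B" using B by simp
    have improve: "G t1" if t1: "t1 \<in> {0..T}" and hyp: "\<forall>\<tau>\<in>{0..<t1}. G \<tau>" for t1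
    proof -
      have xb: "x t1 \<le> 2 * s" using xbound[OF T0 s0(1) x0 xi0 dx dxi xnn gb t1 hyp] by simp
      have ar: "n * (40 * B * s^2) < r / 2"
        by (rule eps_arith[OF r(1) B n s0(1)]) (use s0 \<epsilon> in auto)
      have c1: "\<bar>x t1\<bar> < r" using xb xnn t1 s0 \<epsilon> by auto
      have "\<bar>(y t1 - y0) $ i\<bar> \<le> 40 * B * s^2" for i
        using drift[OF T0 s0(1) x0 xi0 dx dxi xnn gb dyi[of i] wy[of i] Bn t1 hyp] yy0 by simp
      then have "norm (y t1 - y0) \<le> n * (40 * B * s^2)" unfolding n_def by (rule norm_le_card_bound)
      then have c2: "norm (y t1 - y0) < r" using ar r by linarith
      have "\<bar>(eta t1 - eta0) $ i\<bar> \<le> 40 * B * s^2" for i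
        using drift[OF T0 s0(1) x0 xi0 dx dxi xnn gb detai[of i] weta[of i] Bn t1 hyp] ee0 by simp
      then have "norm (eta t1 - eta0) \<le> n * (40 * B * s^2)" unfolding n_def by (rule norm_le_card_bound)
      then have c3: "norm (eta t1 - eta0) < r" using ar r by linarith
      show "G t1" unfolding G_def using c1 c2 c3 by blast
    qed
    have allG: "\<forall>t\<in>{0..T}. G t"
    proof (rule ccontr)
      assume "\<not> (\<forall>t\<in>{0..T}. G t)"
      define S where "S = {t\<in>{0..T}. \<not> G t}"
      have Sne: "S \<noteq> {}" using \<open>\<not> (\<forall>t\<in>{0..T}. G t)\<close> unfolding S_def by auto
      have contx: "continuous_on {0..T} x" using dx by (intro DERIV_continuous_on) auto
      have conty: "continuous_on {0..T} y" unfolding continuous_on_eq_continuous_within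
        using D has_vector_derivative_continuous by blast
      have conte: "continuous_on {0..T} eta" unfolding continuous_on_eq_continuous_within
        using D has_vector_derivative_continuous by blast
      define \<phi> where "\<phi> t = max \<bar>x t\<bar> (max (norm (y t - y0)) (norm (eta t - eta0)))" for t
      have cphi: "continuous_on {0..T} \<phi>" unfolding \<phi>_def
        by (intro continuous_intros contx conty conte)
      have Seq: "S = {0..T} \<inter> \<phi> -` {r..}" unfolding S_def G_def \<phi>_def by (auto simp: le_max_iff_disj)
      have cl: "closed S" unfolding Seq by (rule continuous_closed_preimage[OF cphi]) auto
      have bdd: "bdd_below S" unfolding S_def by (rule bdd_belowI[of _ 0]) auto
      define t1 where "t1 = Inf S"
      have t1S: "t1 \<in> S" unfolding t1_def by (rule closed_contains_Inf[OF Sne bdd cl])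
      then have t1: "t1 \<in> {0..T}" unfolding S_def by auto
      have hyp: "\<forall>\<tau>\<in>{0..<t1}. G \<tau>"
      proof
        fix \<tau> assume \<tau>: "\<tau> \<in> {0..<t1}"
        show "G \<tau>"
        proof (rule ccontr)
          assume "\<not> G \<tau>"
          then have "\<tau> \<in> S" using \<tau> t1 unfolding S_def by auto
          then have "t1 \<le> \<tau>" unfolding t1_def using bdd by (rule cInf_lower)
          then show False using \<tau> by auto
        qed
      qed
      have "G t1" by (rule improve[OF t1 hyp])
      then show False using t1S unfolding S_def by auto
    qed
    show "(\<forall>t\<in>{0<..<T}. deriv xi t < 0) \<and> (\<forall>t\<in>{0..T}. x t \<le> 2 * s)"
    proof
      show "\<forall>t\<in>{0<..<T}. deriv xi t < 0"
      proof
        fix t assume t: "t \<in> {0<..<T}"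
        then have tt: "t \<in> {0..T}" by auto
        have "at t within {0..T} = at t" using t by (intro at_within_Icc_at) auto
        then have "(xi has_real_derivative (- g t * x t)) (at t)" using dxi tt by metis
        then have "deriv xi t = - g t * x t" by (rule DERIV_imp_deriv)
        moreover have "g t \<ge> 1/4" using gb allG tt by blast
        moreover have "x t > 0" using xpos t by blast
        ultimately show "deriv xi t < 0" by (simp add: mult_pos_pos)
      qed
    next
      show "\<forall>t\<in>{0..T}. x t \<le> 2 * s"
      proof
        fix t assume t: "t \<in> {0..T}"
        have "\<forall>\<tau>\<in>{0..<t}. G \<tau>" using allG t by auto
        then show "x t \<le> 2 * s" using xbound[OF T0 s0(1) x0 xi0 dx dxi xnn gb t] by simp
      qed
    qed
  qed
qed

theorem lemma5p2:
  fixes h :: "real \<times> (real^'m) \<Rightarrow> real^'m^'m"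
    and W :: "(real \<times> (real^'m)) set"
    and K :: "(real^'m) set"
  assumes "open W"
    and "metric_family_on h W"
    and "compact K"
    and "\<forall>y\<in>K. (0, y) \<in> W"
  shows "\<exists>C>0. \<forall>y0\<in>K. \<forall>eta0. eta0 \<bullet> (hinv h (0, y0) *v eta0) = 1 \<longrightarrow>
           (\<exists>\<epsilon>>0. \<forall>s\<in>{0<..<\<epsilon>}. \<forall>x y xi eta T.
              short_geodesic h W y0 eta0 s x y xi eta T \<longrightarrow>
                (\<forall>t\<in>{0<..<T}. deriv xi t < 0) \<and> (\<forall>t\<in>{0..T}. x t \<le> C * s))"
proof -
  have "\<forall>y0\<in>K. \<forall>eta0. eta0 \<bullet> (hinv h (0, y0) *v eta0) = 1 \<longrightarrow>
           (\<exists>\<epsilon>>0. \<forall>s\<in>{0<..<\<epsilon>}. \<forall>x y xi eta T.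
              short_geodesic h W y0 eta0 s x y xi eta T \<longrightarrow>
                (\<forall>t\<in>{0<..<T}. deriv xi t < 0) \<and> (\<forall>t\<in>{0..T}. x t \<le> 2 * s))"
  proof (intro ballI allI impI)
    fix y0 eta0 assume "y0 \<in> K" "eta0 \<bullet> (hinv h (0, y0) *v eta0) = 1"
    then show "\<exists>\<epsilon>>0. \<forall>s\<in>{0<..<\<epsilon>}. \<forall>x y xi eta T.
              short_geodesic h W y0 eta0 s x y xi eta T \<longrightarrow>
                (\<forall>t\<in>{0<..<T}. deriv xi t < 0) \<and> (\<forall>t\<in>{0..T}. x t \<le> 2 * s)"
      using main_fixed[OF assms(1,2)] assms(4) by blast
  qed
  then show ?thesis by (intro exI[of _ "2::real"]) simp
qed

end
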